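(* For each $\underline y\in\mathcal F$ there exists $\underline x\in\mathcal F_0$ such that (1) $x_{j,k}\le y_{j,k}$ for all $k\in Q$ and $j\in\tilde V\setminus\{k,0\}$, and hence (2) $\sum_{j\in\tilde R}c_jx_j\le\sum_{j\in\tilde R}c_jy_j$.
   Context: Let $G=(V,E)$ be a finite undirected graph with $V=Q\cup R\cup B$ (pairwise disjoint), where $Q$ is the set of sources, $R$ the set of potential relay locations and $B$ the set of potential sink locations; let $h_{\max}$ be a positive integer and $c_s,c_r\ge0$. Form the augmented graph $\tilde G=(\tilde V,\tilde E)$ with $\tilde V=V\cup\{0\}$, where $0$ is a new vertex (virtual sink), and $\tilde E=E\cup\{\{0,b\}:b\in B\}$. Let $\tilde R=R\cup B$ with node costs $c_j=c_r$ for $j\in R$ and $c_j=c_s$ for $j\in B$. For a source $k\in Q$, a node cut for $k$ is a set $\gamma\subseteq\tilde V\setminus\{k,0\}$ whose deletion disconnects $k$ from $0$ in $\tilde G$; it is minimal if no proper subset is a node cut; $\Gamma^k$ denotes the set of minimal node cuts for $k$. A vector $\underline y=((y_{j,k})_{k\in Q,\,j\in\tilde V\setminus\{k,0\}},(y_j)_{j\in\tilde R})$ belongs to $\mathcal F$ iff: (i) $\sum_{j\in\gamma}y_{j,k}\ge1$ for all $\gamma\in\Gamma^k$, $k\in Q$; (ii) $y_j\ge y_{j,k}$ for all $j\in\tilde R$, $k\in Q$; (iii) $\sum_{j\in\tilde V\setminus\{k,0\}}y_{j,k}\le h_{\max}$ for all $k\in Q$; (iv) all $y_{j,k},y_j\in\{0,1\}$.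 For $k\in Q$ let $\mathcal P'_k$ be the set of paths in $\tilde G$ from $k$ to $0$ with at most $h_{\max}+1$ edges, and let $\mathcal U_0$ be the set of tuples $\underline g=(p_k)_{k\in Q}$ with $p_k\in\mathcal P'_k$. For $\underline g\in\mathcal U_0$ define $\underline x(\underline g)$ by $x_{j,k}=1$ if $j$ is a vertex of $p_k$ and $0$ otherwise ($k\in Q$, $j\in\tilde V\setminus\{k,0\}$), and $x_j=1$ if $x_{j,k}=1$ for some $k\in Q$ and $0$ otherwise ($j\in\tilde R$). Let $\mathcal F_0=\{\underline x(\underline g):\underline g\in\mathcal U_0\}$. *)

theory Defs
  imports Complex_Main
begin

text \<open>The augmented graph lives on the type 'v option: Some v is an original
vertex v, None is the virtual sink 0.\<close>

definition aug_V :: "'v set \<Rightarrow> 'v option set" where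
  "aug_V V = Some ` V \<union> {None}"

definition aug_E :: "'v set set \<Rightarrow> 'v set \<Rightarrow> 'v option set set" where
  "aug_E E B = (image Some) ` E \<union> (\<lambda>b. {None, Some b}) ` B"

definition is_path :: "'a set \<Rightarrow> 'a set set \<Rightarrow> 'a list \<Rightarrow> 'a \<Rightarrow> 'a \<Rightarrow> bool" where
  "is_path Vs Ed p s t \<longleftrightarrow> p \<noteq> [] \<and> hd p = s \<and> last p = t \<and> distinct p \<and> set p \<subseteq> Vs
     \<and> (\<forall>i. Suc i < length p \<longrightarrow> {p ! i, p ! Suc i} \<in> Ed)"

definition node_cut :: "'a set \<Rightarrow> 'a set set \<Rightarrow> 'a \<Rightarrow> 'a \<Rightarrow> 'a set \<Rightarrow> bool" where
  "node_cut Vs Ed s t \<gamma> \<longleftrightarrow> \<gamma> \<subseteq> Vs - {s, t}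
     \<and> \<not> (\<exists>p. is_path Vs Ed p s t \<and> set p \<inter> \<gamma> = {})"

definition min_node_cut :: "'a set \<Rightarrow> 'a set set \<Rightarrow> 'a \<Rightarrow> 'a \<Rightarrow> 'a set \<Rightarrow> bool" where
  "min_node_cut Vs Ed s t \<gamma> \<longleftrightarrow> node_cut Vs Ed s t \<gamma>
     \<and> (\<forall>\<gamma>'. \<gamma>' \<subset> \<gamma> \<longrightarrow> \<not> node_cut Vs Ed s t \<gamma>')"

definition node_cost :: "'v set \<Rightarrow> real \<Rightarrow> real \<Rightarrow> 'v option \<Rightarrow> real" where
  "node_cost R c_r c_s j = (if j \<in> Some ` R then c_r else c_s)"

text \<open>Membership of y = ((y_{j,k}), (y_j)) in F.  yjk j k stands for y_{j,k}, yj j for y_j;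
  only the values on the index domain matter.\<close>
definition in_F :: "'v set \<Rightarrow> 'v set set \<Rightarrow> 'v set \<Rightarrow> 'v set \<Rightarrow> 'v set \<Rightarrow> nat
    \<Rightarrow> ('v option \<Rightarrow> 'v \<Rightarrow> real) \<Rightarrow> ('v option \<Rightarrow> real) \<Rightarrow> bool" where
  "in_F V E Q R B hmax yjk yj \<longleftrightarrow>
     (\<forall>k\<in>Q. \<forall>\<gamma>. min_node_cut (aug_V V) (aug_E E B) (Some k) None \<gamma>
         \<longrightarrow> (\<Sum>j\<in>\<gamma>. yjk j k) \<ge> 1)
   \<and> (\<forall>j\<in>Some ` (R \<union> B). \<forall>k\<in>Q. yj j \<ge> yjk j k)
   \<and> (\<forall>k\<in>Q. (\<Sum>j\<in>aug_V V - {Some k, None}. yjk j k) \<le> real hmax)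
   \<and> (\<forall>k\<in>Q. \<forall>j\<in>aug_V V - {Some k, None}. yjk j k \<in> {0, 1})
   \<and> (\<forall>j\<in>Some ` (R \<union> B). yj j \<in> {0, 1})"

text \<open>P'_k: paths in the augmented graph from k to 0 with at most hmax+1 edges.\<close>
definition short_path :: "'v set \<Rightarrow> 'v set set \<Rightarrow> 'v set \<Rightarrow> nat \<Rightarrow> 'v \<Rightarrow> 'v option list \<Rightarrow> bool" where
  "short_path V E B hmax k p \<longleftrightarrow>
     is_path (aug_V V) (aug_E E B) p (Some k) None \<and> length p \<le> hmax + 2"

definition x_jk :: "('v \<Rightarrow> 'v option list) \<Rightarrow> 'v option \<Rightarrow> 'v \<Rightarrow> real" where
  "x_jk p j k = (if j \<in> set (p k) then 1 else 0)"

definition x_j :: "'v set \<Rightarrow> ('v \<Rightarrow> 'v option list) \<Rightarrow> 'v option \<Rightarrow> real" where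
  "x_j Q p j = (if \<exists>k\<in>Q. x_jk p j k = 1 then 1 else 0)"

end

theory Submission
  imports Defs
begin

lemma exists_min_cut:
  assumes "finite g" "node_cut Vs Ed s t g"
  shows "\<exists>g'\<subseteq>g. min_node_cut Vs Ed s t g'"
  using assms
proof (induction "card g" arbitrary: g rule: less_induct)
  case less
  show ?case
  proof (cases "min_node_cut Vs Ed s t g")
    case True then show ?thesis by blast
  next
    case False
    then obtain g' where "g' \<subset> g" "node_cut Vs Ed s t g'"
      using less.prems unfolding min_node_cut_def by blast
    moreover have "card g' < card g" using \<open>g' \<subset> g\<close> less.prems(1) by (simp add: psubset_card_mono)
    moreover have "finite g'" using \<open>g' \<subset> g\<close> less.prems(1) finite_subset by blast
    ultimately show ?thesis using less.hyps by (meson order.trans psubset_imp_subset)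
  qed
qed

lemma path_card:
  assumes "distinct p" "set p \<subseteq> S \<union> {a, b}" "finite S"
  shows "length p \<le> card S + 2"
proof -
  have "length p = card (set p)" using assms(1) by (simp add: distinct_card)
  also have "\<dots> \<le> card (S \<union> {a, b})" using assms by (intro card_mono) auto
  also have "\<dots> \<le> card S + card {a,b}" by (rule card_Un_le)
  also have "\<dots> \<le> card S + 2" by (simp add: card_insert_if)
  finally show ?thesis .
qed

theorem lemma3:
  fixes V Q R B :: "'v set" and E :: "'v set set" and hmax :: nat and c_s c_r :: real
    and yjk :: "'v option \<Rightarrow> 'v \<Rightarrow> real" and yj :: "'v option \<Rightarrow> real"
  assumes "finite V"
    and "V = Q \<union> R \<union> B" and "Q \<inter> R = {}" and "Q \<inter> B = {}" and "R \<inter> B = {}"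
    and "\<forall>e\<in>E. \<exists>a b. e = {a, b} \<and> a \<noteq> b \<and> a \<in> V \<and> b \<in> V"
    and "hmax > 0" and "c_s \<ge> 0" and "c_r \<ge> 0"
    and "in_F V E Q R B hmax yjk yj"
  shows "\<exists>p. (\<forall>k\<in>Q. short_path V E B hmax k (p k))
           \<and> (\<forall>k\<in>Q. \<forall>j\<in>aug_V V - {Some k, None}. x_jk p j k \<le> yjk j k)
           \<and> (\<Sum>j\<in>Some ` (R \<union> B). node_cost R c_r c_s j * x_j Q p j)
               \<le> (\<Sum>j\<in>Some ` (R \<union> B). node_cost R c_r c_s j * yj j)"
proof -
  note F = assms(10)[unfolded in_F_def]
  have F01: "\<And>k j. k \<in> Q \<Longrightarrow> j \<in> aug_V V - {Some k, None} \<Longrightarrow> yjk j k \<in> {0,1}"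
    using F by blast
  have finA: "finite (aug_V V)" using assms(1) by (simp add: aug_V_def)
  define S where "S k = {j \<in> aug_V V - {Some k, None}. yjk j k = 1}" for k
  define good where "good k q \<longleftrightarrow> short_path V E B hmax k q \<and> set q \<subseteq> S k \<union> {Some k, None}" for k q
  have ex: "\<exists>q. good k q" if kQ: "k \<in> Q" for k
  proof -
    have finS: "finite (S k)" using finA unfolding S_def by auto
    have cardS: "card (S k) \<le> hmax"
    proof -
      have "real (card (S k)) = (\<Sum>j\<in>S k. yjk j k)" unfolding S_def by simp
      also have "\<dots> \<le> (\<Sum>j\<in>aug_V V - {Some k, None}. yjk j k)"
      proof (rule sum_mono2)
        show "finite (aug_V V - {Some k, None})" using finA by simp
        show "S k \<subseteq> aug_V V - {Some k, None}" unfolding S_def by auto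
        fix b assume b: "b \<in> aug_V V - {Some k, None} - S k"
        then have "yjk b k \<in> {0,1}" using F01 kQ by blast
        then show "0 \<le> yjk b k" by auto
      qed
      also have "\<dots> \<le> real hmax" using F kQ by blast
      finally show ?thesis by simp
    qed
    define g where "g = aug_V V - {Some k, None} - S k"
    have "\<exists>q. is_path (aug_V V) (aug_E E B) q (Some k) None \<and> set q \<inter> g = {}"
    proof (rule ccontr)
      assume na: "\<not> ?thesis"
      have "node_cut (aug_V V) (aug_E E B) (Some k) None g"
      proof -
        have "g \<subseteq> aug_V V - {Some k, None}" unfolding g_def by blast
        then show ?thesis unfolding node_cut_def using na by (intro conjI)
      qed
      moreover have "finite g" unfolding g_def using finA by (intro finite_Diff)
      ultimately have "\<exists>g'\<subseteq>g. min_node_cut (aug_V V) (aug_E E B) (Some k) None g'"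
        by (rule exists_min_cut[rotated])
      then obtain g' where g': "g' \<subseteq> g" "min_node_cut (aug_V V) (aug_E E B) (Some k) None g'"
        by blast
      have Fc: "\<forall>k\<in>Q. \<forall>\<gamma>. min_node_cut (aug_V V) (aug_E E B) (Some k) None \<gamma>
         \<longrightarrow> (\<Sum>j\<in>\<gamma>. yjk j k) \<ge> 1" using F by (rule conjunct1)
      have "(\<Sum>j\<in>g'. yjk j k) \<ge> 1" using Fc kQ g'(2) by blast
      moreover have "(\<Sum>j\<in>g'. yjk j k) = 0"
      proof (rule sum.neutral, rule ballI)
        fix j assume "j \<in> g'"
        then have "j \<in> aug_V V - {Some k, None}" "yjk j k \<noteq> 1" using g' unfolding g_def S_def by auto
        then show "yjk j k = 0" using F kQ by auto
      qed
      ultimately show False by simp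
    qed
    then obtain q where q: "is_path (aug_V V) (aug_E E B) q (Some k) None" "set q \<inter> g = {}" by blast
    have sq: "set q \<subseteq> S k \<union> {Some k, None}" using q unfolding g_def is_path_def by auto
    have "length q \<le> card (S k) + 2" using path_card[OF _ sq finS] q(1) unfolding is_path_def by blast
    then have "length q \<le> hmax + 2" using cardS by simp
    then show ?thesis using q sq unfolding good_def short_path_def by blast
  qed
  define p where "p k = (SOME q. good k q)" for k
  have gp: "good k (p k)" if "k \<in> Q" for k
    unfolding p_def using ex[OF that] by (rule someI_ex)
  have c1: "\<forall>k\<in>Q. short_path V E B hmax k (p k)" using gp good_def by blast
  have c2: "x_jk p j k \<le> yjk j k" if kQ: "k \<in> Q" and j: "j \<in> aug_V V - {Some k, None}" for j k
  proof (cases "j \<in> set (p k)")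
    case True
    then have "j \<in> S k" using gp[OF kQ] j unfolding good_def by auto
    then show ?thesis unfolding S_def x_jk_def using True by simp
  next
    case False
    have "yjk j k \<in> {0,1}" using F kQ j by blast
    then show ?thesis unfolding x_jk_def using False by auto
  qed
  have c3: "node_cost R c_r c_s j * x_j Q p j \<le> node_cost R c_r c_s j * yj j"
    if j: "j \<in> Some ` (R \<union> B)" for j
  proof -
    have nc: "node_cost R c_r c_s j \<ge> 0" unfolding node_cost_def using assms(8,9) by simp
    have yj01: "yj j \<in> {0,1}" using F j by blast
    have "x_j Q p j \<le> yj j"
    proof (cases "\<exists>k\<in>Q. x_jk p j k = 1")
      case True
      then obtain k where kQ: "k \<in> Q" and "x_jk p j k = 1" by blast
      have jn: "j \<noteq> Some k" "j \<noteq> None" using j kQ assms(3,4) by auto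
      have jA: "j \<in> aug_V V" using j assms(2) unfolding aug_V_def by auto
      have "1 \<le> yjk j k" using c2[OF kQ] jA jn \<open>x_jk p j k = 1\<close> by fastforce
      also have "\<dots> \<le> yj j" using F j kQ by blast
      finally show ?thesis using True unfolding x_j_def by simp
    next
      case False
      then show ?thesis using yj01 unfolding x_j_def by auto
    qed
    then show ?thesis using nc by (simp add: mult_left_mono)
  qed
  have "(\<Sum>j\<in>Some ` (R \<union> B). node_cost R c_r c_s j * x_j Q p j)
               \<le> (\<Sum>j\<in>Some ` (R \<union> B). node_cost R c_r c_s j * yj j)"
    by (rule sum_mono) (rule c3)
  then show ?thesis using c1 c2 by blast
qed

end
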